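(* Let $\lambda\in\mathbb Z^n\setminus\{0\}$ have coprime coefficients and let $N\subseteq\mathcal N(\lambda)$ be a set of rank $n-1$. Then: (a) a polynomial $p\in\mathbb Z[X_1,\dots,X_n]$ satisfies $p(\gamma)=0$ for all $\gamma\in N$ if and only if $\mathbf X^{\lambda^+}-\mathbf X^{\lambda^-}$ divides $p$; (b) $\mathbf X^{\lambda^+}-\mathbf X^{\lambda^-}$ is irreducible in $\mathbb Z[X_1,\dots,X_n]$.
   Context: For $\alpha\in\mathbb N_0^n$, $\mathbf X^\alpha=\prod_iX_i^{(\alpha)_i}$. For $\gamma\in\mathbb Z^n$ and $p\in\mathbb Z[X_1,\dots,X_n]$, $p(\gamma)\in\mathbb Q(x)$ denotes the image of $p$ under the ring homomorphism $X_i\mapsto x^{(\gamma)_i}$. For $\lambda\in\mathbb Z^n$, $\lambda^+,\lambda^-$ are the unique vectors in $\mathbb N_0^n$ with $\lambda=\lambda^+-\lambda^-$ and $\lambda^+\cdot\lambda^-=0$. $\lambda$ has coprime coefficients if the gcd of its coordinates is $1$. $\mathcal N(\lambda)=\{\alpha\in\mathbb Z^n:\lambda\cdot\alpha=0\}$. For $M\subseteq\mathbb Q^n$, $M\mathbb Q$ denotes the $\mathbb Q$-subspace spanned by $M$; $M$ has rank $r$ if $\dim M\mathbb Q=r$ and $M$ is not covered by any finite union of subspaces of $M\mathbb Q$ of dimension $r-1$. *)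

theory Defs
  imports Main "HOL-Library.Poly_Mapping" "HOL-Library.Function_Algebras" "HOL-Computational_Algebra.Factorial_Ring"
    "HOL-Computational_Algebra.Fraction_Field" "HOL-Computational_Algebra.Polynomial"
begin

text \<open>Integer polynomials in the variables X_v, v ranging over a finite type 'v
  (so n = CARD('v)): the monoid ring Z[N_0^'v], i.e. finitely supported maps
  from exponent vectors to integer coefficients, with convolution product.\<close>
type_synonym 'v intpoly = "('v \<Rightarrow>\<^sub>0 nat) \<Rightarrow>\<^sub>0 int"

definition mono_X :: "('v \<Rightarrow>\<^sub>0 nat) \<Rightarrow> 'v intpoly" where
  "mono_X \<alpha> = Poly_Mapping.single \<alpha> 1"

text \<open>lambda^+ and lambda^- (for finite 'v the supports are finite).\<close>
definition pos_part :: "('v::finite \<Rightarrow> int) \<Rightarrow> ('v \<Rightarrow>\<^sub>0 nat)" where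
  "pos_part l = Abs_poly_mapping (\<lambda>i. nat (l i))"
definition neg_part :: "('v::finite \<Rightarrow> int) \<Rightarrow> ('v \<Rightarrow>\<^sub>0 nat)" where
  "neg_part l = Abs_poly_mapping (\<lambda>i. nat (- l i))"

definition binom_poly :: "('v::finite \<Rightarrow> int) \<Rightarrow> 'v intpoly" where
  "binom_poly l = mono_X (pos_part l) - mono_X (neg_part l)"

type_synonym ratfun = "rat poly fract"
definition xvar :: ratfun where "xvar = Fraction_Field.Fract [:0, 1:] 1"

text \<open>p(gamma): image of p under the ring homomorphism X_i \<mapsto> x^(gamma_i).\<close>
definition eval_at :: "('v::finite \<Rightarrow> int) \<Rightarrow> 'v intpoly \<Rightarrow> ratfun" where
  "eval_at \<gamma> p = (\<Sum>\<alpha>\<in>Poly_Mapping.keys p.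
      of_int (Poly_Mapping.lookup p \<alpha>) * (\<Prod>i\<in>UNIV. xvar powi (\<gamma> i * int (Poly_Mapping.lookup \<alpha> i))))"

definition coprime_coeffs :: "('v \<Rightarrow> int) \<Rightarrow> bool" where
  "coprime_coeffs l \<longleftrightarrow> Gcd (range l) = 1"

definition null_lattice :: "('v::finite \<Rightarrow> int) \<Rightarrow> ('v \<Rightarrow> int) set" where
  "null_lattice l = {\<alpha>. (\<Sum>i\<in>UNIV. l i * \<alpha> i) = 0}"

definition qscale :: "rat \<Rightarrow> ('v \<Rightarrow> rat) \<Rightarrow> ('v \<Rightarrow> rat)" where
  "qscale c f = (\<lambda>i. c * f i)"

definition qspan :: "('v \<Rightarrow> rat) set \<Rightarrow> ('v \<Rightarrow> rat) set" where
  "qspan M = module.span qscale M"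
definition qsubspace :: "('v \<Rightarrow> rat) set \<Rightarrow> bool" where
  "qsubspace U = module.subspace qscale U"
definition qdim :: "('v \<Rightarrow> rat) set \<Rightarrow> nat" where
  "qdim U = vector_space.dim qscale U"

text \<open>M has rank r: dim (M Q) = r and M is not covered by any finite union of
  subspaces of M Q of dimension r - 1 (computed in the integers, so for r = 0
  there are no such subspaces).\<close>
definition has_rank :: "('v \<Rightarrow> rat) set \<Rightarrow> nat \<Rightarrow> bool" where
  "has_rank M r \<longleftrightarrow> qdim (qspan M) = r \<and>
     \<not> (\<exists>F. finite F \<and> (\<forall>U\<in>F. qsubspace U \<and> U \<subseteq> qspan M \<and> int (qdim U) = int r - 1)
            \<and> M \<subseteq> \<Union>F)"

definition rat_vecs :: "('v \<Rightarrow> int) set \<Rightarrow> ('v \<Rightarrow> rat) set" where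
  "rat_vecs N = (\<lambda>\<alpha>. (\<lambda>i. of_int (\<alpha> i))) ` N"

end

theory Submission
  imports Defs "HOL-Computational_Algebra.Polynomial_Factorial"
begin


interpretation Q: vector_space "qscale :: rat \<Rightarrow> ('v \<Rightarrow> rat) \<Rightarrow> _"
  by unfold_locales (auto simp: qscale_def fun_eq_iff algebra_simps)

lemma sum_apply: "(\<Sum>x\<in>A. f x) i = (\<Sum>x\<in>A. f x i)"
  by (induct A rule: infinite_finite_induct) auto

definition evv :: "'v \<Rightarrow> 'v \<Rightarrow> rat" where "evv i = (\<lambda>j. if j = i then 1 else 0)"

lemma inj_evv: "inj evv"
  by (auto simp: inj_def evv_def fun_eq_iff split: if_splits)

lemma fdvs: "finite_dimensional_vector_space qscale (range (evv :: 'v::finite \<Rightarrow> _))"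
proof (unfold_locales)
  show "finite (range (evv :: 'v \<Rightarrow> _))" by simp
  show "Q.independent (range (evv :: 'v \<Rightarrow> _))"
  proof (rule Q.independent_if_scalars_zero)
    fix f and x :: "'v \<Rightarrow> rat"
    assume h: "(\<Sum>x\<in>range (evv :: 'v \<Rightarrow> _). qscale (f x) x) = 0" and x: "x \<in> range evv"
    then obtain i :: 'v where xi: "x = evv i" by auto
    have "(\<Sum>x\<in>range (evv :: 'v \<Rightarrow> _). qscale (f x) x) = (\<Sum>j\<in>UNIV. qscale (f (evv j)) (evv j))"
      by (simp add: sum.reindex[OF inj_evv])
    then have "(\<Sum>j\<in>UNIV. qscale (f (evv j)) (evv j)) i = 0" using h by simp
    moreover have "(\<Sum>j\<in>UNIV. qscale (f (evv j)) (evv j)) i = (\<Sum>j\<in>UNIV. if j = i then f (evv j) else 0)"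
      unfolding sum_apply by (intro sum.cong) (auto simp: qscale_def evv_def)
    moreover have "(\<Sum>j\<in>UNIV. if j = i then f (evv j) else 0) = f (evv i)" by simp
    ultimately show "f x = 0" using xi by simp
  qed simp
  show "Q.span (range (evv :: 'v \<Rightarrow> _)) = UNIV"
  proof -
    have "v \<in> Q.span (range evv)" for v :: "'v \<Rightarrow> rat"
    proof -
      have "v = (\<Sum>j\<in>UNIV. qscale (v j) (evv j))"
      proof
        fix x
        have "(\<Sum>j\<in>UNIV. qscale (v j) (evv j)) x = (\<Sum>j\<in>UNIV. if x = j then v j else 0)"
          unfolding sum_apply by (intro sum.cong) (auto simp: qscale_def evv_def)
        then show "v x = (\<Sum>j\<in>UNIV. qscale (v j) (evv j)) x" by simp
      qed
      also have "\<dots> \<in> Q.span (range evv)"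
        by (intro Q.span_sum Q.span_scale Q.span_base) auto
      finally show ?thesis .
    qed
    then show ?thesis by auto
  qed
qed

lemma dim_univ: "Q.dim (UNIV :: ('v::finite \<Rightarrow> rat) set) = card (UNIV :: 'v set)"
proof -
  interpret F: finite_dimensional_vector_space "qscale :: rat \<Rightarrow> ('v \<Rightarrow> rat) \<Rightarrow> _" "range evv"
    by (rule fdvs)
  show ?thesis using card_image[OF inj_evv] by simp
qed

definition qdot :: "('v::finite \<Rightarrow> int) \<Rightarrow> ('v \<Rightarrow> rat) \<Rightarrow> rat" where
  "qdot d v = (\<Sum>i\<in>UNIV. of_int (d i) * v i)"

lemma qdot_add: "qdot d (x + y) = qdot d x + qdot d y"
  by (simp add: qdot_def algebra_simps sum.distrib)
lemma qdot_diff: "qdot d (x - y) = qdot d x - qdot d y"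
  by (simp add: qdot_def algebra_simps sum_subtractf)
lemma qdot_scale: "qdot d (qscale c x) = c * qdot d x"
  by (simp add: qdot_def qscale_def sum_distrib_left algebra_simps)
lemma qdot_zero: "qdot d 0 = 0"
  by (simp add: qdot_def)

lemma subspace_ker: "Q.subspace {v. qdot d v = 0}"
  by (auto simp: Q.subspace_def qdot_add qdot_scale qdot_zero)

lemma dim_hyper:
  fixes S :: "('v::finite \<Rightarrow> rat) set"
  assumes S: "Q.subspace S" and m: "m \<in> S" "qdot d m \<noteq> 0"
  shows "Q.dim (S \<inter> {v. qdot d v = 0}) + 1 = Q.dim S"
proof -
  interpret F: finite_dimensional_vector_space "qscale :: rat \<Rightarrow> ('v \<Rightarrow> rat) \<Rightarrow> _" "range evv"
    by (rule fdvs)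
  let ?T = "S \<inter> {v. qdot d v = 0}"
  have T: "Q.subspace ?T" using S subspace_ker Q.subspace_inter by blast
  obtain B where B: "B \<subseteq> ?T" "Q.independent B" "?T \<subseteq> Q.span B" "card B = Q.dim ?T"
    using Q.basis_exists by blast
  have spB: "Q.span B \<subseteq> ?T" using B(1) T Q.span_minimal by blast
  have mB: "m \<notin> Q.span B" using spB m by auto
  have finB: "finite B" using B(2) F.finiteI_independent by blast
  have ind: "Q.independent (insert m B)" using Q.independent_insertI[OF mB B(2)] .
  have sub: "insert m B \<subseteq> S" using B(1) m by auto
  have sp: "S \<subseteq> Q.span (insert m B)"
  proof
    fix s assume s: "s \<in> S"
    let ?k = "qdot d s / qdot d m"
    have "s - qscale ?k m \<in> ?T"
      using s m S by (auto simp: qdot_diff qdot_scale Q.subspace_diff Q.subspace_scale)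
    then have "s - qscale ?k m \<in> Q.span B" using B(3) by auto
    then show "s \<in> Q.span (insert m B)" using Q.span_breakdown_eq by blast
  qed
  have "Q.dim S = card (insert m B)"
    using Q.dim_unique[OF sub sp ind refl] .
  have "m \<notin> B" using mB Q.span_base by blast
  then have "card (insert m B) = card B + 1" using finB by simp
  then show ?thesis using B(4) \<open>Q.dim S = card (insert m B)\<close> by simp
qed

lemma not_all_orth:
  fixes S :: "('v::finite \<Rightarrow> rat) set" and l d :: "'v \<Rightarrow> int"
  assumes S: "Q.subspace S" "S \<subseteq> {v. qdot l v = 0}" "Q.dim S = card (UNIV::'v set) - 1"
    and l: "l \<noteq> 0" and d: "\<not> (\<exists>c::rat. \<forall>i. of_int (d i) = c * of_int (l i))"
  shows "\<exists>m\<in>S. qdot d m \<noteq> 0"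
proof (rule ccontr)
  assume "\<not> ?thesis"
  hence orth: "\<forall>m\<in>S. qdot d m = 0" by auto
  interpret F: finite_dimensional_vector_space "qscale :: rat \<Rightarrow> ('v \<Rightarrow> rat) \<Rightarrow> _" "range evv"
    by (rule fdvs)
  obtain B where B: "B \<subseteq> S" "Q.independent B" "S \<subseteq> Q.span B" "card B = Q.dim S"
    using Q.basis_exists by blast
  have spB: "Q.span B \<subseteq> S" using B(1) S(1) Q.span_minimal by blast
  have finB: "finite B" using B(2) F.finiteI_independent by blast
  define L where "L = (\<lambda>i. of_int (l i) :: rat)"
  define Dv where "Dv = (\<lambda>i. of_int (d i) :: rat)"
  obtain i0 where i0: "l i0 \<noteq> 0" using l by (auto simp: fun_eq_iff)
  have "qdot l L > 0"
    unfolding qdot_def L_def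
    by (rule sum_pos2[where i=i0]) (use i0 in \<open>auto simp: zero_less_mult_iff\<close>)
  hence L1: "L \<notin> Q.span B" using spB S(2) by auto
  have L2: "Dv \<notin> Q.span (insert L B)"
  proof
    assume "Dv \<in> Q.span (insert L B)"
    then obtain k where k: "Dv - qscale k L \<in> Q.span B" using Q.span_breakdown_eq by blast
    define w where "w = Dv - qscale k L"
    have wS: "w \<in> S" using k spB w_def by auto
    have w1: "qdot l w = 0" using wS S(2) by auto
    have w2: "qdot d w = 0" using wS orth by auto
    have "(\<Sum>i\<in>UNIV. w i * w i) = qdot d w - k * qdot l w"
      by (simp add: w_def qdot_def Dv_def L_def qscale_def sum_subtractf sum_distrib_left sum.distrib algebra_simps)
    hence "(\<Sum>i\<in>UNIV. w i * w i) = 0" using w1 w2 by simp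
    hence "\<forall>i\<in>UNIV. w i * w i = 0" by (subst (asm) sum_nonneg_eq_0_iff) auto
    hence "\<forall>i. of_int (d i) = k * of_int (l i)" by (auto simp: w_def Dv_def L_def qscale_def)
    thus False using d by blast
  qed
  have LB: "L \<notin> B" using L1 Q.span_base by blast
  have DB: "Dv \<notin> insert L B" using L2 Q.span_base by blast
  have ind: "Q.independent (insert Dv (insert L B))"
    using Q.independent_insertI[OF L2 Q.independent_insertI[OF L1 B(2)]] .
  have "card (insert Dv (insert L B)) = card B + 2" using finB LB DB by simp
  moreover have "card (insert Dv (insert L B)) \<le> Q.dim (UNIV :: ('v \<Rightarrow> rat) set)"
    using F.independent_card_le_dim[OF _ ind] by blast
  moreover have "card (UNIV::'v set) > 0" by (simp add: card_gt_0_iff)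
  ultimately show False using B(4) S(3) dim_univ[where 'v='v] by simp
qed

lemma qdot_int: "qdot d (\<lambda>i. of_int (g i)) = of_int (\<Sum>i\<in>UNIV. d i * g i)"
  by (simp add: qdot_def)

lemma avoid:
  fixes l :: "'v::finite \<Rightarrow> int" and N :: "('v \<Rightarrow> int) set"
  assumes l: "l \<noteq> 0" and N: "N \<subseteq> null_lattice l"
    and rk: "has_rank (rat_vecs N) (card (UNIV :: 'v set) - 1)"
    and D: "finite D" "\<forall>d\<in>D. \<not> (\<exists>c::rat. \<forall>i. of_int (d i) = c * of_int (l i))"
  shows "\<exists>\<gamma>\<in>N. \<forall>d\<in>D. (\<Sum>i\<in>UNIV. d i * \<gamma> i) \<noteq> 0"
proof -
  define M where "M = rat_vecs N"
  define S where "S = Q.span M"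
  have dimS: "Q.dim S = card (UNIV :: 'v set) - 1" and
    nocov: "\<not> (\<exists>F. finite F \<and> (\<forall>U\<in>F. Q.subspace U \<and> U \<subseteq> S \<and> int (Q.dim U) = int (card (UNIV :: 'v set) - 1) - 1) \<and> M \<subseteq> \<Union>F)"
    using rk unfolding has_rank_def qdim_def qspan_def qsubspace_def S_def M_def by auto
  have Ssub: "Q.subspace S" unfolding S_def by simp
  have Mker: "M \<subseteq> {v. qdot l v = 0}"
    using N by (auto simp: M_def rat_vecs_def qdot_int null_lattice_def)
  have Sker: "S \<subseteq> {v. qdot l v = 0}"
    unfolding S_def using Q.span_minimal[OF Mker subspace_ker] .
  define U where "U d = S \<inter> {v. qdot d v = 0}" for d
  have Ud: "Q.subspace (U d) \<and> U d \<subseteq> S \<and> int (Q.dim (U d)) = int (card (UNIV :: 'v set) - 1) - 1"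
    if "d \<in> D" for d
  proof -
    have nd: "\<not> (\<exists>c::rat. \<forall>i. of_int (d i) = c * of_int (l i))" using D(2) that by blast
    obtain m where m: "m \<in> S" "qdot d m \<noteq> 0"
      using not_all_orth[OF Ssub Sker dimS l nd] by blast
    have "Q.dim (U d) + 1 = Q.dim S" unfolding U_def by (rule dim_hyper[OF Ssub m])
    then show ?thesis using Ssub subspace_ker Q.subspace_inter dimS by (auto simp: U_def)
  qed
  have "\<not> M \<subseteq> \<Union>(U ` D)"
    using nocov D(1) Ud by blast
  then obtain m where m: "m \<in> M" "\<forall>d\<in>D. m \<notin> U d" by blast
  then obtain \<gamma> where g: "\<gamma> \<in> N" "m = (\<lambda>i. of_int (\<gamma> i))" by (auto simp: M_def rat_vecs_def)
  have "m \<in> S" using m(1) Q.span_superset S_def by blast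
  then have "\<forall>d\<in>D. qdot d m \<noteq> 0" using m(2) by (auto simp: U_def)
  have "(\<Sum>i\<in>UNIV. d i * \<gamma> i) \<noteq> 0" if "d \<in> D" for d
  proof -
    have "qdot d m \<noteq> 0" using that \<open>\<forall>d\<in>D. qdot d m \<noteq> 0\<close> by blast
    hence "(of_int (\<Sum>i\<in>UNIV. d i * \<gamma> i) :: rat) \<noteq> 0" by (simp only: g qdot_int not_False_eq_True)
    thus ?thesis by (metis of_int_0)
  qed
  then show ?thesis using g by blast
qed



definition ivec :: "('v \<Rightarrow>\<^sub>0 nat) \<Rightarrow> 'v \<Rightarrow> int" where
  "ivec a = (\<lambda>i. int (Poly_Mapping.lookup a i))"

definition dz :: "('v::finite \<Rightarrow> int) \<Rightarrow> ('v \<Rightarrow> int) \<Rightarrow> int" where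
  "dz g v = (\<Sum>i\<in>UNIV. g i * v i)"

definition EE :: "('v::finite \<Rightarrow> int) \<Rightarrow> ('v \<Rightarrow>\<^sub>0 nat) \<Rightarrow> ratfun" where
  "EE g a = xvar powi (dz g (ivec a))"

lemma xvar_to_fract: "xvar = to_fract [:0, 1:]"
  by (simp add: xvar_def to_fract_def)

lemma xvar_nz: "xvar \<noteq> 0"
  by (simp add: xvar_to_fract)

lemma prod_powi: "finite A \<Longrightarrow> (\<Prod>i\<in>A. xvar powi (f i)) = xvar powi (\<Sum>i\<in>A. f i)"
  by (induct A rule: finite_induct) (auto simp: power_int_add xvar_nz)

lemma eval_S:
  assumes "finite S" "Poly_Mapping.keys p \<subseteq> S"
  shows "eval_at g p = (\<Sum>a\<in>S. of_int (Poly_Mapping.lookup p a) * EE g a)"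
proof -
  have "eval_at g p = (\<Sum>a\<in>Poly_Mapping.keys p. of_int (Poly_Mapping.lookup p a) * EE g a)"
    unfolding eval_at_def EE_def dz_def ivec_def
    by (intro sum.cong refl) (simp add: prod_powi)
  also have "\<dots> = (\<Sum>a\<in>S. of_int (Poly_Mapping.lookup p a) * EE g a)"
    using assms by (intro sum.mono_neutral_left) (auto simp: in_keys_iff)
  finally show ?thesis .
qed

lemma eval_add: "eval_at g (p + q) = eval_at g p + eval_at g q"
proof -
  let ?S = "Poly_Mapping.keys p \<union> Poly_Mapping.keys q"
  have "Poly_Mapping.keys (p + q) \<subseteq> ?S" by (rule keys_add)
  then show ?thesis
    by (simp add: eval_S[of ?S] lookup_add sum.distrib algebra_simps)
qed

lemma eval_zero: "eval_at g 0 = 0"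
  by (simp add: eval_at_def)

lemma eval_single: "eval_at g (Poly_Mapping.single a c) = of_int c * EE g a"
  by (subst eval_S[of "{a}"]) auto

lemma eval_sum: "eval_at g (\<Sum>i\<in>I. f i) = (\<Sum>i\<in>I. eval_at g (f i))"
  by (induct I rule: infinite_finite_induct) (auto simp: eval_zero eval_add)

lemma eval_minus: "eval_at g (- p) = - eval_at g p"
proof -
  have "eval_at g p + eval_at g (- p) = 0" using eval_add[of g p "- p"] by (simp add: eval_zero)
  then show ?thesis by (metis add.commute eq_neg_iff_add_eq_0)
qed

lemma eval_diff: "eval_at g (p - q) = eval_at g p - eval_at g q"
  using eval_add[of g p "- q"] eval_minus[of g q] by simp

lemma poly_expand: "p = (\<Sum>a\<in>Poly_Mapping.keys p. Poly_Mapping.single a (Poly_Mapping.lookup p a))"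
proof (rule poly_mapping_eqI)
  fix k
  have "Poly_Mapping.lookup (\<Sum>a\<in>Poly_Mapping.keys p. Poly_Mapping.single a (Poly_Mapping.lookup p a)) k
      = (\<Sum>a\<in>Poly_Mapping.keys p. if a = k then Poly_Mapping.lookup p a else 0)"
    by (simp add: lookup_sum lookup_single when_def)
  also have "\<dots> = Poly_Mapping.lookup p k" by (simp add: in_keys_iff)
  finally show "Poly_Mapping.lookup p k = Poly_Mapping.lookup (\<Sum>a\<in>Poly_Mapping.keys p. Poly_Mapping.single a (Poly_Mapping.lookup p a)) k" by simp
qed

lemma EE_add: "EE g (a + b) = EE g a * EE g b"
  by (simp add: EE_def dz_def ivec_def lookup_add algebra_simps sum.distrib power_int_add xvar_nz)

lemma EE_zero: "EE g 0 = 1"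
  by (simp add: EE_def dz_def ivec_def)

lemma eval_mult: "eval_at g (p * q) = eval_at g p * eval_at g q"
proof -
  have "p * q = (\<Sum>a\<in>Poly_Mapping.keys p. Poly_Mapping.single a (Poly_Mapping.lookup p a)) * (\<Sum>b\<in>Poly_Mapping.keys q. Poly_Mapping.single b (Poly_Mapping.lookup q b))"
    by (subst poly_expand[of p], subst poly_expand[of q]) (rule refl)
  also have "\<dots> = (\<Sum>a\<in>Poly_Mapping.keys p. \<Sum>b\<in>Poly_Mapping.keys q. Poly_Mapping.single (a + b) (Poly_Mapping.lookup p a * Poly_Mapping.lookup q b))"
    by (simp add: sum_product mult_single)
  finally have "eval_at g (p * q) = (\<Sum>a\<in>Poly_Mapping.keys p. \<Sum>b\<in>Poly_Mapping.keys q. (of_int (Poly_Mapping.lookup p a) * EE g a) * (of_int (Poly_Mapping.lookup q b) * EE g b))"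
    by (simp add: eval_sum eval_single EE_add algebra_simps)
  also have "\<dots> = eval_at g p * eval_at g q"
    by (simp add: eval_S[of "Poly_Mapping.keys p" p] eval_S[of "Poly_Mapping.keys q" q] sum_product)
  finally show ?thesis .
qed

lemma eval_one: "eval_at g 1 = 1"
proof -
  have "eval_at g (Poly_Mapping.single 0 1) = 1" by (simp only: eval_single EE_zero) simp
  then show ?thesis by simp
qed

lemma lookup_pos: "Poly_Mapping.lookup (pos_part l) i = nat (l i)"
  by (simp add: pos_part_def)
lemma lookup_neg: "Poly_Mapping.lookup (neg_part l) i = nat (- l i)"
  by (simp add: neg_part_def)

lemma mono_X_add: "mono_X (a + b) = mono_X a * mono_X b"
  by (simp add: mono_X_def mult_single)

lemma eval_binom:
  assumes "g \<in> null_lattice l"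
  shows "eval_at g (binom_poly l) = 0"
proof -
  have "(\<Sum>i\<in>UNIV. g i * int (nat (l i))) - (\<Sum>i\<in>UNIV. g i * int (nat (- l i))) = (\<Sum>i\<in>UNIV. l i * g i)"
    by (simp add: sum_subtractf[symmetric] algebra_simps) (intro sum.cong refl, simp add: algebra_simps nat_def)
  also have "\<dots> = 0" using assms by (simp add: null_lattice_def)
  finally have "dz g (ivec (pos_part l)) = dz g (ivec (neg_part l))"
    by (simp add: dz_def ivec_def lookup_pos lookup_neg)
  then show ?thesis
    by (simp add: binom_poly_def eval_diff mono_X_def eval_single EE_def)
qed

lemma int_aux:
  fixes A B K L :: int
  assumes "B = A + (K + 1) * L" "0 \<le> A" "0 \<le> B" "0 \<le> K"
  shows "0 \<le> A + K * L" "0 \<le> A + K * L - int (nat (- L))"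
    "B = (A + K * L - int (nat (- L))) + int (nat L)"
proof -
  have e: "B = A + K * L + L" using assms(1) by (simp add: algebra_simps)
  show "0 \<le> A + K * L" "0 \<le> A + K * L - int (nat (- L))"
    "B = (A + K * L - int (nat (- L))) + int (nat L)"
  proof (atomize (full), cases "0 \<le> L")
    case True
    then have "0 \<le> K * L" using assms(4) by simp
    then show "0 \<le> A + K * L \<and> 0 \<le> A + K * L - int (nat (- L)) \<and> B = (A + K * L - int (nat (- L))) + int (nat L)"
      using True assms e by simp
  next
    case False
    then show "0 \<le> A + K * L \<and> 0 \<le> A + K * L - int (nat (- L)) \<and> B = (A + K * L - int (nat (- L))) + int (nat L)"
      using assms e by simp
  qed
qed

lemma K1:
  "(\<forall>i. int (Poly_Mapping.lookup b i) = int (Poly_Mapping.lookup a i) + int k * l i)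
    \<Longrightarrow> binom_poly (l::'v::finite \<Rightarrow> int) dvd (mono_X a - mono_X b)"
proof (induct k arbitrary: b)
  case 0
  then have "b = a" by (intro poly_mapping_eqI) simp
  then show ?case by simp
next
  case (Suc k)
  have ia: "0 \<le> int (Poly_Mapping.lookup a i) + int k * l i"
    and ic: "0 \<le> int (Poly_Mapping.lookup a i) + int k * l i - int (nat (- l i))"
    and ib: "int (Poly_Mapping.lookup b i) = (int (Poly_Mapping.lookup a i) + int k * l i - int (nat (- l i))) + int (nat (l i))"
    for i
  proof -
    have pi: "int (Poly_Mapping.lookup b i) = int (Poly_Mapping.lookup a i) + (int k + 1) * l i"
      using Suc.prems by (simp add: algebra_simps)
    show "0 \<le> int (Poly_Mapping.lookup a i) + int k * l i"
      "0 \<le> int (Poly_Mapping.lookup a i) + int k * l i - int (nat (- l i))"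
      "int (Poly_Mapping.lookup b i) = (int (Poly_Mapping.lookup a i) + int k * l i - int (nat (- l i))) + int (nat (l i))"
      using int_aux[OF pi] by simp_all
  qed
  define a' where "a' = Abs_poly_mapping (\<lambda>i. nat (int (Poly_Mapping.lookup a i) + int k * l i))"
  have la': "int (Poly_Mapping.lookup a' i) = int (Poly_Mapping.lookup a i) + int k * l i" for i
    using ia[of i] by (simp add: a'_def)
  have d1: "binom_poly l dvd (mono_X a - mono_X a')"
    using Suc.hyps la' by simp
  define c where "c = Abs_poly_mapping (\<lambda>i. nat (int (Poly_Mapping.lookup a' i) - int (nat (- l i))))"
  have lc: "int (Poly_Mapping.lookup c i) = int (Poly_Mapping.lookup a' i) - int (nat (- l i))" for i
    using ic[of i] la'[of i] by (simp add: c_def)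
  have a'c: "a' = c + neg_part l"
  proof (intro poly_mapping_eqI)
    fix i show "Poly_Mapping.lookup a' i = Poly_Mapping.lookup (c + neg_part l) i"
      using lc[of i] unfolding lookup_add lookup_neg by linarith
  qed
  have bc: "b = c + pos_part l"
  proof (intro poly_mapping_eqI)
    fix i show "Poly_Mapping.lookup b i = Poly_Mapping.lookup (c + pos_part l) i"
      using lc[of i] la'[of i] ib[of i] unfolding lookup_add lookup_pos by linarith
  qed
  have "mono_X a' - mono_X b = - (mono_X c * binom_poly l)"
    by (simp add: a'c bc mono_X_add binom_poly_def algebra_simps)
  then have d2: "binom_poly l dvd (mono_X a' - mono_X b)" by simp
  have "mono_X a - mono_X b = (mono_X a - mono_X a') + (mono_X a' - mono_X b)" by simp
  then show ?case using d1 d2 by (metis dvd_add)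
qed

definition rel :: "('v \<Rightarrow> int) \<Rightarrow> ('v \<Rightarrow>\<^sub>0 nat) \<Rightarrow> ('v \<Rightarrow>\<^sub>0 nat) \<Rightarrow> bool" where
  "rel l a b \<longleftrightarrow> (\<exists>k::int. \<forall>i. int (Poly_Mapping.lookup b i) = int (Poly_Mapping.lookup a i) + k * l i)"

lemma rel_refl: "rel l a a"
  unfolding rel_def by (rule exI[of _ 0]) simp

lemma rel_sym: "rel l a b \<Longrightarrow> rel l b a"
  unfolding rel_def
proof (elim exE)
  fix k assume h: "\<forall>i. int (Poly_Mapping.lookup b i) = int (Poly_Mapping.lookup a i) + k * l i"
  show "\<exists>k. \<forall>i. int (Poly_Mapping.lookup a i) = int (Poly_Mapping.lookup b i) + k * l i"
    by (rule exI[of _ "- k"]) (use h in \<open>simp add: algebra_simps\<close>)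
qed

lemma rel_trans: "rel l a b \<Longrightarrow> rel l b c \<Longrightarrow> rel l a c"
  unfolding rel_def
proof (elim exE)
  fix k1 k2 assume h1: "\<forall>i. int (Poly_Mapping.lookup b i) = int (Poly_Mapping.lookup a i) + k1 * l i"
    and h2: "\<forall>i. int (Poly_Mapping.lookup c i) = int (Poly_Mapping.lookup b i) + k2 * l i"
  show "\<exists>k. \<forall>i. int (Poly_Mapping.lookup c i) = int (Poly_Mapping.lookup a i) + k * l i"
    by (rule exI[of _ "k1 + k2"]) (use h1 h2 in \<open>simp add: algebra_simps\<close>)
qed


lemma K1':
  assumes "rel l a b"
  shows "binom_poly (l::'v::finite \<Rightarrow> int) dvd (mono_X a - mono_X b)"
proof -
  obtain k where k: "\<forall>i. int (Poly_Mapping.lookup b i) = int (Poly_Mapping.lookup a i) + k * l i"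
    using assms rel_def by blast
  show ?thesis
  proof (cases "0 \<le> k")
    case True
    then show ?thesis using K1[of b a "nat k" l] k by simp
  next
    case False
    have "\<forall>i. int (Poly_Mapping.lookup a i) = int (Poly_Mapping.lookup b i) + int (nat (- k)) * l i"
      using k False by (simp add: algebra_simps)
    then have "binom_poly l dvd (mono_X b - mono_X a)" by (rule K1)
    then show ?thesis by (metis dvd_minus_iff minus_diff_eq)
  qed
qed


lemma lookup_shift:
  "Poly_Mapping.lookup (Poly_Mapping.single a 1 * q) x
    = (\<Sum>k\<in>Poly_Mapping.keys q. if a + k = x then Poly_Mapping.lookup q k else (0::int))"
proof -
  have "Poly_Mapping.single a 1 * q = Poly_Mapping.single a 1 * (\<Sum>k\<in>Poly_Mapping.keys q. Poly_Mapping.single k (Poly_Mapping.lookup q k))"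
    by (subst poly_expand[of q]) (rule refl)
  also have "\<dots> = (\<Sum>k\<in>Poly_Mapping.keys q. Poly_Mapping.single (a + k) (Poly_Mapping.lookup q k))"
    by (simp add: sum_distrib_left mult_single)
  finally show ?thesis by (simp add: lookup_sum lookup_single when_def)
qed


lemma shift_inj:
  fixes q :: "'v intpoly"
  assumes lt: "Poly_Mapping.lookup a i < Poly_Mapping.lookup b i"
    and eq: "Poly_Mapping.single a 1 * q = Poly_Mapping.single b 1 * q"
  shows "q = 0"
proof (rule ccontr)
  assume "q \<noteq> 0"
  then have ne: "Poly_Mapping.keys q \<noteq> {}" by simp
  define m where "m = Max ((\<lambda>t. Poly_Mapping.lookup t i) ` Poly_Mapping.keys q)"
  have "m \<in> (\<lambda>t. Poly_Mapping.lookup t i) ` Poly_Mapping.keys q" unfolding m_def using ne by simp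
  then obtain s where s: "s \<in> Poly_Mapping.keys q" "Poly_Mapping.lookup s i = m" by auto
  have mx: "Poly_Mapping.lookup t i \<le> m" if "t \<in> Poly_Mapping.keys q" for t
    unfolding m_def using that by simp
  have "Poly_Mapping.lookup (Poly_Mapping.single b 1 * q) (b + s) = Poly_Mapping.lookup q s"
    unfolding lookup_shift add_left_cancel using s(1) by simp
  moreover have "Poly_Mapping.lookup (Poly_Mapping.single a 1 * q) (b + s) = 0"
    unfolding lookup_shift
  proof (intro sum.neutral ballI)
    fix k assume k: "k \<in> Poly_Mapping.keys q"
    have "a + k \<noteq> b + s"
    proof
      assume "a + k = b + s"
      then have "Poly_Mapping.lookup (a + k) i = Poly_Mapping.lookup (b + s) i" by simp
      then have "Poly_Mapping.lookup k i > m" using lt s(2) by (simp add: lookup_add)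
      then show False using mx[OF k] by simp
    qed
    then show "(if a + k = b + s then Poly_Mapping.lookup q k else 0) = 0" by simp
  qed
  ultimately show False using eq s(1) by (simp add: in_keys_iff)
qed


lemma binom_cancel:
  assumes l: "l \<noteq> 0" and z: "binom_poly (l::'v::finite \<Rightarrow> int) * q = 0"
  shows "q = 0"
proof -
  obtain i where i: "l i \<noteq> 0" using l by (auto simp: fun_eq_iff)
  have ne: "Poly_Mapping.lookup (pos_part l) i \<noteq> Poly_Mapping.lookup (neg_part l) i"
    using i by (simp add: lookup_pos lookup_neg)
  have eq: "Poly_Mapping.single (pos_part l) 1 * q = Poly_Mapping.single (neg_part l) 1 * q"
  proof -
    have "Poly_Mapping.single (pos_part l) 1 * q - Poly_Mapping.single (neg_part l) 1 * q = 0"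
      using z by (simp only: binom_poly_def mono_X_def left_diff_distrib)
    then show ?thesis by (simp only: right_minus_eq)
  qed
  show ?thesis
  proof (cases "Poly_Mapping.lookup (pos_part l) i < Poly_Mapping.lookup (neg_part l) i")
    case True then show ?thesis by (rule shift_inj[OF _ eq])
  next
    case False
    then have "Poly_Mapping.lookup (neg_part l) i < Poly_Mapping.lookup (pos_part l) i" using ne by simp
    then show ?thesis by (rule shift_inj[OF _ eq[symmetric]])
  qed
qed

lemma to_fract_of_int: "to_fract (of_int c) = (of_int c :: 'a::idom fract)"
  by (induct c rule: int_induct[where k=0]) (simp_all add: of_int_add of_int_diff)

lemma to_fract_power: "to_fract (p ^ k) = to_fract p ^ k"
  by (induct k) simp_all

lemma to_fract_sum: "to_fract (\<Sum>i\<in>I. f i) = (\<Sum>i\<in>I. to_fract (f i))"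
  by (induct I rule: infinite_finite_induct) simp_all

lemma xvar_pow: "xvar ^ k = to_fract (monom (1::rat) k)"
  by (simp add: xvar_to_fract to_fract_power monom_altdef)

lemma laurent_indep:
  assumes R: "finite R" and inj: "inj_on e R"
    and z: "(\<Sum>r\<in>R. of_int (c r) * xvar powi (e r)) = 0" and r0: "r0 \<in> R"
  shows "c r0 = 0"
proof -
  define s where "s = (\<Sum>r\<in>R. nat \<bar>e r\<bar>)"
  have es: "0 \<le> e r + int s" if "r \<in> R" for r
  proof -
    have "nat \<bar>e r\<bar> \<le> s" unfolding s_def using R that by (intro member_le_sum) auto
    then show ?thesis by linarith
  qed
  define n where "n r = nat (e r + int s)" for r
  have pw: "xvar powi (e r) * xvar ^ s = xvar ^ n r" if "r \<in> R" for r
  proof -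
    have "xvar powi (e r) * xvar ^ s = xvar powi (e r) * xvar powi (int s)" by simp
    also have "\<dots> = xvar powi (e r + int s)" by (simp add: power_int_add xvar_nz)
    also have "e r + int s = int (n r)" using es[OF that] by (simp add: n_def)
    finally show ?thesis by simp
  qed
  have "(\<Sum>r\<in>R. of_int (c r) * xvar powi (e r)) * xvar ^ s = (\<Sum>r\<in>R. of_int (c r) * xvar ^ n r)"
    by (simp add: sum_distrib_right mult.assoc pw)
  then have "(\<Sum>r\<in>R. of_int (c r) * xvar ^ n r) = 0" using z by simp
  then have "to_fract (\<Sum>r\<in>R. monom (of_int (c r) :: rat) (n r)) = 0"
  proof -
    have m: "to_fract (monom (of_int (c r) :: rat) (n r)) = of_int (c r) * xvar ^ n r" for r
    proof -
      have "monom (of_int (c r)::rat) (n r) = of_int (c r) * monom 1 (n r)"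
        by (simp add: of_int_monom mult_monom)
      then show ?thesis by (simp add: xvar_pow to_fract_of_int)
    qed
    show ?thesis unfolding to_fract_sum m by fact
  qed
  then have P0: "(\<Sum>r\<in>R. monom (of_int (c r) :: rat) (n r)) = 0" by (simp only: to_fract_eq_0_iff)
  have ninj: "n r = n r0 \<Longrightarrow> r \<in> R \<Longrightarrow> r = r0" for r
    using es[of r] es[OF r0] inj r0 unfolding n_def inj_on_def by (metis nat_int_add add_right_cancel
        int_nat_eq nat_eq_iff2 of_nat_eq_iff)
  have "coeff (\<Sum>r\<in>R. monom (of_int (c r) :: rat) (n r)) (n r0) = (\<Sum>r\<in>R. if r = r0 then of_int (c r) else 0)"
    unfolding coeff_sum by (intro sum.cong refl) (auto dest: ninj)
  also have "\<dots> = of_int (c r0)" using R r0 by simp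
  finally show ?thesis using P0 by simp
qed

lemma rat_mult_int:
  assumes g: "Gcd (range l) = (1::int)" and d: "\<forall>i. of_int (d i) = (c::rat) * of_int (l i)"
  shows "\<exists>k::int. \<forall>i. d i = k * l i"
proof -
  obtain a b where q: "quotient_of c = (a, b)" by (cases "quotient_of c") auto
  have b0: "b > 0" using q quotient_of_denom_pos by blast
  have cab: "c = of_int a / of_int b" using q quotient_of_div by blast
  have cop: "coprime a b" using q quotient_of_coprime by blast
  have e: "d i * b = a * l i" for i
  proof -
    have "of_int (d i) = of_int a / of_int b * (of_int (l i) :: rat)" using d cab by simp
    then have "of_int (d i) * of_int b = (of_int a * of_int (l i) :: rat)" using b0 by (simp add: field_simps)
    then show ?thesis by (metis of_int_eq_iff of_int_mult)
  qed
  have "b dvd l i" for i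
  proof -
    have "b dvd a * l i" using e[of i] by (metis dvd_triv_right)
    then show ?thesis using cop by (simp add: coprime_commute coprime_dvd_mult_right_iff)
  qed
  then have "b dvd Gcd (range l)" by (intro Gcd_greatest) auto
  then have "b = 1" using g b0 by simp
  then show ?thesis using e by auto
qed

lemma single_sum: "Poly_Mapping.single r (\<Sum>a\<in>A. f a) = (\<Sum>a\<in>A. Poly_Mapping.single r (f a))"
  by (induct A rule: infinite_finite_induct) (simp_all add: single_add)

lemma main_L:
  fixes l :: "'v::finite \<Rightarrow> int" and p :: "'v intpoly"
  assumes l: "l \<noteq> 0" and cop: "coprime_coeffs l"
  shows "binom_poly l dvd p \<or> (\<exists>D. finite D \<and> (\<forall>d\<in>D. \<not> (\<exists>c::rat. \<forall>i. of_int (d i) = c * of_int (l i)))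
      \<and> (\<forall>\<gamma>\<in>null_lattice l. (\<forall>d\<in>D. (\<Sum>i\<in>UNIV. d i * \<gamma> i) \<noteq> 0) \<longrightarrow> eval_at \<gamma> p \<noteq> 0))"
proof -
  define K where "K = Poly_Mapping.keys p"
  have finK: "finite K" by (simp add: K_def)
  define rep where "rep a = (SOME b. b \<in> K \<and> rel l a b)" for a
  have rep1: "rep a \<in> K \<and> rel l a (rep a)" if "a \<in> K" for a
    unfolding rep_def by (rule someI[of _ a]) (use that rel_refl in auto)
  have rep2: "rep a = rep a'" if "rel l a a'" for a a'
  proof -
    have "(\<lambda>b. b \<in> K \<and> rel l a b) = (\<lambda>b. b \<in> K \<and> rel l a' b)"
      using that rel_sym rel_trans by blast
    then show ?thesis unfolding rep_def by simp
  qed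
  define q where "q = (\<Sum>a\<in>K. Poly_Mapping.single (rep a) (Poly_Mapping.lookup p a))"
  have dq: "binom_poly l dvd (p - q)"
  proof -
    have "p - q = (\<Sum>a\<in>K. Poly_Mapping.single a (Poly_Mapping.lookup p a) - Poly_Mapping.single (rep a) (Poly_Mapping.lookup p a))"
      unfolding q_def K_def sum_subtractf by (subst poly_expand[of p]) (rule refl)
    also have "\<dots> = (\<Sum>a\<in>K. Poly_Mapping.single 0 (Poly_Mapping.lookup p a) * (mono_X a - mono_X (rep a)))"
      by (simp add: mono_X_def right_diff_distrib mult_single)
    finally show ?thesis
      by (simp only:) (intro dvd_sum dvd_mult K1', use rep1 in blast)
  qed
  show ?thesis
  proof (cases "q = 0")
    case True
    then show ?thesis using dq by simp
  next
    case False
    define R where "R = rep ` K"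
    have finR: "finite R" using finK by (simp add: R_def)
    define \<sigma> where "\<sigma> r = (\<Sum>a\<in>{a. a \<in> K \<and> rep a = r}. Poly_Mapping.lookup p a)" for r
    have qR: "q = (\<Sum>r\<in>R. Poly_Mapping.single r (\<sigma> r))"
    proof -
      have "q = (\<Sum>r\<in>R. \<Sum>a\<in>{a. a \<in> K \<and> rep a = r}. Poly_Mapping.single (rep a) (Poly_Mapping.lookup p a))"
        unfolding q_def R_def by (rule sum.image_gen[OF finK])
      also have "\<dots> = (\<Sum>r\<in>R. \<Sum>a\<in>{a. a \<in> K \<and> rep a = r}. Poly_Mapping.single r (Poly_Mapping.lookup p a))"
        by (intro sum.cong refl) auto
      also have "\<dots> = (\<Sum>r\<in>R. Poly_Mapping.single r (\<sigma> r))"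
        by (simp add: \<sigma>_def single_sum)
      finally show ?thesis .
    qed
    obtain r0 where r0: "r0 \<in> R" "\<sigma> r0 \<noteq> 0"
    proof -
      have "\<exists>r\<in>R. \<sigma> r \<noteq> 0"
      proof (rule ccontr)
        assume "\<not> ?thesis"
        then have "q = 0" unfolding qR by simp
        then show False using False by simp
      qed
      then show ?thesis using that by blast
    qed
    have Rrep: "rep r = r" if "r \<in> R" for r
      using that rep1 rep2 unfolding R_def by (metis imageE)
    have Rsep: "r = r'" if "r \<in> R" "r' \<in> R" "rel l r r'" for r r'
      using rep2[OF that(3)] Rrep that(1,2) by simp
    define D where "D = (\<lambda>(r, r'). (\<lambda>i. int (Poly_Mapping.lookup r i) - int (Poly_Mapping.lookup r' i))) `
        {(r, r'). r \<in> R \<and> r' \<in> R \<and> r \<noteq> r'}"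
    have finD: "finite D"
    proof -
      have "{(r, r'). r \<in> R \<and> r' \<in> R \<and> r \<noteq> r'} \<subseteq> R \<times> R" by auto
      then have "finite {(r, r'). r \<in> R \<and> r' \<in> R \<and> r \<noteq> r'}" using finR finite_subset by blast
      then show ?thesis unfolding D_def by simp
    qed
    have Dgood: "\<not> (\<exists>c::rat. \<forall>i. of_int (d i) = c * of_int (l i))" if dD: "d \<in> D" for d
    proof
      assume "\<exists>c::rat. \<forall>i. of_int (d i) = c * of_int (l i)"
      then obtain c :: rat where c: "\<forall>i. of_int (d i) = c * of_int (l i)" by blast
      obtain k where k: "\<forall>i. d i = k * l i"
        using rat_mult_int[OF _ c] cop by (auto simp: coprime_coeffs_def)
      obtain r r' where rr: "r \<in> R" "r' \<in> R" "r \<noteq> r'"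
        and dr: "d = (\<lambda>i. int (Poly_Mapping.lookup r i) - int (Poly_Mapping.lookup r' i))"
        using dD unfolding D_def by auto
      have "rel l r' r" unfolding rel_def
        by (rule exI[of _ k]) (use k dr in \<open>auto simp: fun_eq_iff algebra_simps\<close>)
      then show False using Rsep[OF rr(2,1)] rr(3) by simp
    qed
    have evl: "eval_at \<gamma> p \<noteq> 0"
      if g: "\<gamma> \<in> null_lattice l" and gd: "\<forall>d\<in>D. (\<Sum>i\<in>UNIV. d i * \<gamma> i) \<noteq> 0" for \<gamma>
    proof
      assume ep: "eval_at \<gamma> p = 0"
      obtain h where h: "p - q = binom_poly l * h" using dq by blast
      have "eval_at \<gamma> (p - q) = 0" unfolding h eval_mult eval_binom[OF g] by simp
      then have "eval_at \<gamma> q = 0" using ep by (simp add: eval_diff)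
      then have z: "(\<Sum>r\<in>R. of_int (\<sigma> r) * xvar powi (dz \<gamma> (ivec r))) = 0"
        unfolding qR eval_sum eval_single EE_def .
      have inj: "inj_on (\<lambda>r. dz \<gamma> (ivec r)) R"
      proof (rule inj_onI, rule ccontr)
        fix r r' assume rr: "r \<in> R" "r' \<in> R" "dz \<gamma> (ivec r) = dz \<gamma> (ivec r')" "r \<noteq> r'"
        define d where "d = (\<lambda>i. int (Poly_Mapping.lookup r i) - int (Poly_Mapping.lookup r' i))"
        have "d \<in> D" unfolding D_def d_def using rr by auto
        moreover have "(\<Sum>i\<in>UNIV. d i * \<gamma> i) = dz \<gamma> (ivec r) - dz \<gamma> (ivec r')"
          by (simp add: d_def dz_def ivec_def sum_subtractf[symmetric] algebra_simps)
        ultimately show False using gd rr(3) by simp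
      qed
      have "\<sigma> r0 = 0" by (rule laurent_indep[OF finR inj z r0(1)])
      then show False using r0(2) by simp
    qed
    show ?thesis using finD Dgood evl by blast
  qed
qed

theorem lemma3p8:
  fixes l :: "'v::finite \<Rightarrow> int" and N :: "('v \<Rightarrow> int) set"
  assumes "l \<noteq> 0"
    and "coprime_coeffs l"
    and "N \<subseteq> null_lattice l"
    and "has_rank (rat_vecs N) (card (UNIV :: 'v set) - 1)"
  shows "(\<forall>p :: 'v intpoly. (\<forall>\<gamma>\<in>N. eval_at \<gamma> p = 0) \<longleftrightarrow> binom_poly l dvd p)
         \<and> irreducible (binom_poly l)"
proof -
  note l = assms(1) and cop = assms(2) and N = assms(3) and rk = assms(4)
  have a: "(\<forall>\<gamma>\<in>N. eval_at \<gamma> p = 0) \<longleftrightarrow> binom_poly l dvd p" for p :: "'v intpoly"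
  proof
    assume h: "\<forall>\<gamma>\<in>N. eval_at \<gamma> p = 0"
    show "binom_poly l dvd p"
    proof (rule ccontr)
      assume nd: "\<not> binom_poly l dvd p"
      then obtain D where D: "finite D" "\<forall>d\<in>D. \<not> (\<exists>c::rat. \<forall>i. of_int (d i) = c * of_int (l i))"
        "\<forall>\<gamma>\<in>null_lattice l. (\<forall>d\<in>D. (\<Sum>i\<in>UNIV. d i * \<gamma> i) \<noteq> 0) \<longrightarrow> eval_at \<gamma> p \<noteq> 0"
        using main_L[OF l cop, of p] by blast
      obtain \<gamma> where "\<gamma> \<in> N" "\<forall>d\<in>D. (\<Sum>i\<in>UNIV. d i * \<gamma> i) \<noteq> 0"
        using avoid[OF l N rk D(1,2)] by blast
      then show False using D(3) h N by blast
    qed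
  next
    assume "binom_poly l dvd p"
    then obtain h where h: "p = binom_poly l * h" by blast
    show "\<forall>\<gamma>\<in>N. eval_at \<gamma> p = 0"
      using N by (auto simp: h eval_mult eval_binom)
  qed
  obtain \<gamma>0 where g0: "\<gamma>0 \<in> N"
    using avoid[OF l N rk, of "{}"] by auto
  have b: "irreducible (binom_poly l)"
  proof (rule irreducibleI)
    show "binom_poly l \<noteq> 0"
    proof
      assume "binom_poly l = 0"
      then have "binom_poly l * 1 = 0" by simp
      then have "(1::'v intpoly) = 0" by (rule binom_cancel[OF l])
      then show False by simp
    qed
    show "\<not> binom_poly l dvd 1"
    proof
      assume "binom_poly l dvd 1"
      then have "eval_at \<gamma>0 1 = 0" using a g0 by blast
      then show False by (simp add: eval_one)
    qed
  next
    fix f g assume fg: "binom_poly l = f * g"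
    have unit_other: "y dvd 1" if xy: "binom_poly l dvd x" "binom_poly l = x * y" for x y :: "'v intpoly"
    proof -
      obtain h where h: "x = binom_poly l * h" using xy(1) by blast
      have "binom_poly l * (1 - h * y) = 0" using xy(2) h by (simp add: algebra_simps)
      then have "1 - h * y = 0" by (rule binom_cancel[OF l])
      then have "1 = y * h" by (simp add: algebra_simps)
      then show ?thesis by (rule dvdI)
    qed
    show "f dvd 1 \<or> g dvd 1"
    proof (rule ccontr)
      assume nu: "\<not> (f dvd 1 \<or> g dvd 1)"
      have nf: "\<not> binom_poly l dvd f" using unit_other[of f g] fg nu by blast
      have fg': "binom_poly l = g * f" using fg by (simp add: mult.commute)
      have ng: "\<not> binom_poly l dvd g" using unit_other[of g f] fg' nu by blast
      obtain Df where Df: "finite Df" "\<forall>d\<in>Df. \<not> (\<exists>c::rat. \<forall>i. of_int (d i) = c * of_int (l i))"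
        "\<forall>\<gamma>\<in>null_lattice l. (\<forall>d\<in>Df. (\<Sum>i\<in>UNIV. d i * \<gamma> i) \<noteq> 0) \<longrightarrow> eval_at \<gamma> f \<noteq> 0"
        using main_L[OF l cop, of f] nf by blast
      obtain Dg where Dg: "finite Dg" "\<forall>d\<in>Dg. \<not> (\<exists>c::rat. \<forall>i. of_int (d i) = c * of_int (l i))"
        "\<forall>\<gamma>\<in>null_lattice l. (\<forall>d\<in>Dg. (\<Sum>i\<in>UNIV. d i * \<gamma> i) \<noteq> 0) \<longrightarrow> eval_at \<gamma> g \<noteq> 0"
        using main_L[OF l cop, of g] ng by blast
      have "finite (Df \<union> Dg)" "\<forall>d\<in>Df \<union> Dg. \<not> (\<exists>c::rat. \<forall>i. of_int (d i) = c * of_int (l i))"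
        using Df Dg by auto
      from avoid[OF l N rk this] obtain \<gamma> where
        gm: "\<gamma> \<in> N" "\<forall>d\<in>Df \<union> Dg. (\<Sum>i\<in>UNIV. d i * \<gamma> i) \<noteq> 0" by blast
      have gn: "\<gamma> \<in> null_lattice l" using gm N by blast
      have "eval_at \<gamma> f \<noteq> 0" "eval_at \<gamma> g \<noteq> 0" using Df(3) Dg(3) gm gn by auto
      moreover have "eval_at \<gamma> f * eval_at \<gamma> g = 0"
        using eval_binom[OF gn] fg by (simp add: eval_mult)
      ultimately show False by simp
    qed
  qed
  show ?thesis using a b by blast
qed

end
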